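(* Let $\theta=\sqrt{b/a}$ with $a<b$ coprime positive integers not both perfect squares. For all $C,D>0$ there exist $\varepsilon>\eta>C$ with $\varepsilon-\eta<D$ such that $$0=\liminf_{B\to\infty}\delta_{\theta,B,1/2}(\chi_{\varepsilon,\eta})<\limsup_{B\to\infty}\delta_{\theta,B,1/2}(\chi_{\varepsilon,\eta})=O_{\varepsilon,\eta}(1).$$ In particular, the measures $\delta_{\theta,B,1/2}$ have no limit measure as $B\to\infty$.
   Context: On $\mathbb{P}^1(\mathbb{Q})$ use the height $H([u:v])=\max(|u|,|v|)$ with $u,v$ coprime integers. For a real number $\theta$, $r>0$, $B>0$ and $f$ a compactly supported function on $\mathbb{R}$, set $\delta_{\theta,B,r}(f)=\sum_{[u:v]\in\mathbb{P}^1(\mathbb{Q}),\,v\ne0,\,H([u:v])\le B}f\big(B^{1/r}(u/v-\theta)\big)$. For $\varepsilon>\eta\ge0$, $\chi_{\varepsilon,\eta}$ is the indicator function of $\{t\in\mathbb{R}:\eta<|t|\le\varepsilon\}$ and $\chi_\varepsilon=\chi_{\varepsilon,0}$ is that of $\{|t|\le\varepsilon\}$. *)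

theory Defs
  imports Complex_Main "HOL-Library.Extended_Real" "HOL-Library.Liminf_Limsup"
begin

text \<open>Points of P^1(Q) with v nonzero are represented uniquely by coprime (u,v) with v > 0;
  H([u:v]) = max(|u|,|v|).\<close>
definition delta :: "real \<Rightarrow> real \<Rightarrow> real \<Rightarrow> (real \<Rightarrow> real) \<Rightarrow> real" where
  "delta \<theta> B r f =
     (\<Sum>p \<in> {(u :: int, v :: int). 0 < v \<and> coprime u v \<and> max \<bar>real_of_int u\<bar> \<bar>real_of_int v\<bar> \<le> B}.
        f (B powr (1 / r) * (real_of_int (fst p) / real_of_int (snd p) - \<theta>)))"

definition chi :: "real \<Rightarrow> real \<Rightarrow> real \<Rightarrow> real" where
  "chi \<epsilon> \<eta> t = (if \<eta> < \<bar>t\<bar> \<and> \<bar>t\<bar> \<le> \<epsilon> then 1 else 0)"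

end

theory Submission
  imports Defs "HOL-Analysis.Kronecker_Approximation_Theorem"
begin


lemma frac_eq:
  fixes u v u' v' :: int
  assumes "coprime u v" "coprime u' v'" "0 < v" "0 < v'" "u * v' = u' * v"
  shows "u = u' \<and> v = v'"
proof -
  have "v dvd u * v'" using assms(5) by simp
  then have "v dvd v'" using assms(1) by (metis coprime_commute coprime_dvd_mult_right_iff)
  have "v' dvd u' * v" using assms(5) by (metis dvd_triv_right)
  then have "v' dvd v" using assms(2) by (metis coprime_commute coprime_dvd_mult_right_iff)
  have "v = v'" using \<open>v dvd v'\<close> \<open>v' dvd v\<close> assms(3,4) by (simp add: zdvd_antisym_nonneg)
  then show ?thesis using assms(4,5) by simp
qed

lemma irr:
  fixes a b :: nat
  assumes "0 < a" "0 < b" "coprime a b" "\<not> ((\<exists>k. a = k ^ 2) \<and> (\<exists>k. b = k ^ 2))"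
  shows "sqrt (real b / real a) \<notin> \<rat>"
proof
  assume "sqrt (real b / real a) \<in> \<rat>"
  then obtain m n :: nat where n0: "n \<noteq> 0" and e: "\<bar>sqrt (real b / real a)\<bar> = real m / real n"
    and cop: "coprime m n"
    by (rule Rats_abs_nat_div_natE)
  have "real b / real a = (real m / real n)^2" 
  proof -
    have "sqrt (real b / real a) = real m / real n" using e by simp
    moreover have "sqrt (real b / real a) ^ 2 = real b / real a" by simp
    ultimately show ?thesis by simp
  qed
  then have "real b * real n ^ 2 = real a * real m ^ 2" using assms(1) n0 by (simp add: field_simps power_divide)
  then have eq: "b * n^2 = a * m^2" by (metis of_nat_eq_iff of_nat_mult of_nat_power)
  have m0: "m \<noteq> 0"
  proof
    assume "m = 0"
    then have "b * n^2 = 0" using eq by simp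
    then show False using assms(2) n0 by simp
  qed
  have c2: "coprime (m^2) (n^2)" using cop by simp
  have "m^2 dvd b * n^2" using eq by simp
  then have "m^2 dvd b" using c2 by (simp add: coprime_dvd_mult_left_iff)
  then obtain x where bx: "b = m^2 * x" by blast
  have "n^2 dvd a * m^2" using eq by (metis dvd_triv_right)
  then have "n^2 dvd a" using c2 by (metis coprime_commute coprime_dvd_mult_left_iff)
  then obtain y where ay: "a = n^2 * y" by blast
  have "m^2 * n^2 * x = m^2 * n^2 * y" using eq bx ay by (simp add: ac_simps)
  then have "x = y" using m0 n0 by simp
  have "x dvd a" "x dvd b" using ay bx \<open>x = y\<close> by auto
  then have "x = 1" using assms(3) by (meson coprime_common_divisor_nat)
  then show False using assms(4) ay bx \<open>x = y\<close> by auto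
qed



lemma card_bound:
  fixes A :: "(int \<times> int) set" and Q L c :: real
  assumes Q: "Q > 0" and L: "L \<ge> 0"
    and A: "\<And>u v. (u, v) \<in> A \<Longrightarrow> coprime u v \<and> 0 < v \<and> real_of_int v \<le> Q \<and>
              c \<le> real_of_int u / real_of_int v \<and> real_of_int u / real_of_int v \<le> c + L"
  shows "finite A \<and> card A \<le> nat \<lfloor>L * Q^2\<rfloor> + 1"
proof -
  define f where "f = (\<lambda>p :: int \<times> int. nat \<lfloor>(real_of_int (fst p) / real_of_int (snd p) - c) * Q^2\<rfloor>)"
  have im: "f ` A \<subseteq> {0..nat \<lfloor>L * Q^2\<rfloor>}"
  proof
    fix y assume "y \<in> f ` A"
    then obtain u v where uv: "(u,v) \<in> A" and y: "y = f (u,v)" by auto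
    have "(real_of_int u / real_of_int v - c) * Q^2 \<le> L * Q^2"
      using A[OF uv] by (intro mult_right_mono) auto
    then show "y \<in> {0..nat \<lfloor>L * Q^2\<rfloor>}" unfolding y f_def
      by (simp add: floor_mono nat_mono)
  qed
  have inj: "inj_on f A"
  proof (rule inj_onI)
    fix p p' assume p: "p \<in> A" and p': "p' \<in> A" and fe: "f p = f p'"
    obtain u v where [simp]: "p = (u,v)" by (cases p)
    obtain u' v' where [simp]: "p' = (u',v')" by (cases p')
    note h = A[of u v] A[of u' v']
    have hu: "coprime u v" "0 < v" "real_of_int v \<le> Q" "c \<le> real_of_int u / real_of_int v"
      using h p by auto
    have hu': "coprime u' v'" "0 < v'" "real_of_int v' \<le> Q" "c \<le> real_of_int u' / real_of_int v'"
      using h p' by auto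
    define x where "x = (real_of_int u / real_of_int v - c) * Q^2"
    define x' where "x' = (real_of_int u' / real_of_int v' - c) * Q^2"
    have x0: "x \<ge> 0" "x' \<ge> 0" using hu hu' unfolding x_def x'_def by auto
    have "nat \<lfloor>x\<rfloor> = nat \<lfloor>x'\<rfloor>" using fe unfolding f_def x_def x'_def by simp
    moreover have "0 \<le> \<lfloor>x\<rfloor>" "0 \<le> \<lfloor>x'\<rfloor>" using x0 by simp_all
    ultimately have "\<lfloor>x\<rfloor> = \<lfloor>x'\<rfloor>" by (metis nat_0_le)
    then have xd: "\<bar>x - x'\<bar> < 1" by linarith
    have "u * v' = u' * v"
    proof (rule ccontr)
      assume ne: "u * v' \<noteq> u' * v"
      then have "\<bar>u * v' - u' * v\<bar> \<ge> 1" by linarith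
      then have n1: "\<bar>real_of_int u * real_of_int v' - real_of_int u' * real_of_int v\<bar> \<ge> 1"
        by (metis of_int_1_le_iff of_int_abs of_int_diff of_int_mult)
      have "x - x' = (real_of_int u * real_of_int v' - real_of_int u' * real_of_int v) / (real_of_int v * real_of_int v') * Q^2"
        unfolding x_def x'_def using hu(2) hu'(2) by (simp add: field_simps)
      then have "\<bar>x - x'\<bar> = \<bar>real_of_int u * real_of_int v' - real_of_int u' * real_of_int v\<bar> * (Q^2 / (real_of_int v * real_of_int v'))"
        using hu(2) hu'(2) by (simp add: abs_mult)
      also have "\<dots> \<ge> 1 * 1"
      proof (rule mult_mono)
        have "real_of_int v * real_of_int v' \<le> Q * Q"
          using hu hu' by (intro mult_mono) auto
        then show "1 \<le> Q^2 / (real_of_int v * real_of_int v')"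
          using hu(2) hu'(2) by (simp add: power2_eq_square)
      qed (use n1 in auto)
      finally show False using xd by simp
    qed
    then show "p = p'" using frac_eq[OF hu(1) hu'(1) hu(2) hu'(2)] by simp
  qed
  have fin: "finite (f ` A)" using im finite_subset by blast
  then have "finite A" using inj finite_imageD by blast
  moreover have "card A \<le> nat \<lfloor>L * Q^2\<rfloor> + 1"
    using card_mono[OF _ im] card_image[OF inj] by simp
  ultimately show ?thesis by simp
qed

definition TT :: "real \<Rightarrow> (int \<times> int) set" where
  "TT B = {(u :: int, v :: int). 0 < v \<and> coprime u v \<and> max \<bar>real_of_int u\<bar> \<bar>real_of_int v\<bar> \<le> B}"

lemma TT_finite: "finite (TT B)"
proof -
  have "TT B \<subseteq> {-\<lceil>B\<rceil>..\<lceil>B\<rceil>} \<times> {-\<lceil>B\<rceil>..\<lceil>B\<rceil>}"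
  proof
    fix p assume "p \<in> TT B"
    then obtain u v where p: "p = (u,v)" and hu: "\<bar>real_of_int u\<bar> \<le> B" "\<bar>real_of_int v\<bar> \<le> B"
      unfolding TT_def by auto
    have "\<And>w::int. \<bar>real_of_int w\<bar> \<le> B \<Longrightarrow> w \<in> {-\<lceil>B\<rceil>..\<lceil>B\<rceil>}"
    proof -
      fix w :: int assume "\<bar>real_of_int w\<bar> \<le> B"
      then have "real_of_int w \<le> B" "- B \<le> real_of_int w" by linarith+
      moreover have "B \<le> real_of_int \<lceil>B\<rceil>" by (rule le_of_int_ceiling)
      ultimately have "real_of_int w \<le> real_of_int \<lceil>B\<rceil>" "real_of_int (- \<lceil>B\<rceil>) \<le> real_of_int w" by (linarith, simp, linarith)
      then have "w \<le> \<lceil>B\<rceil>" "- \<lceil>B\<rceil> \<le> w" by (simp_all only: of_int_le_iff)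
      then show "w \<in> {-\<lceil>B\<rceil>..\<lceil>B\<rceil>}" by simp
    qed
    then show "p \<in> {-\<lceil>B\<rceil>..\<lceil>B\<rceil>} \<times> {-\<lceil>B\<rceil>..\<lceil>B\<rceil>}" using p hu by auto
  qed
  then show ?thesis by (rule finite_subset) auto
qed

lemma delta_card:
  assumes "B > 0"
  shows "delta \<theta> B (1/2) (chi \<epsilon> \<eta>) = real (card {p \<in> TT B. \<eta> < \<bar>B^2 * (real_of_int (fst p) / real_of_int (snd p) - \<theta>)\<bar> \<and>
              \<bar>B^2 * (real_of_int (fst p) / real_of_int (snd p) - \<theta>)\<bar> \<le> \<epsilon>})"
proof -
  have pw: "B powr (1 / (1/2)) = B^2" using assms by (simp add: powr_numeral)
  show ?thesis
    unfolding delta_def chi_def pw TT_def[symmetric]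
    by (simp add: sum.inter_filter[OF TT_finite, symmetric])
qed

lemma delta_nonneg: "delta \<theta> B r (chi \<epsilon> \<eta>) \<ge> 0"
  unfolding delta_def chi_def by (intro sum_nonneg) auto



abbreviation cond :: "real \<Rightarrow> real \<Rightarrow> real \<Rightarrow> real \<Rightarrow> int \<times> int \<Rightarrow> bool" where
  "cond \<theta> \<epsilon> \<eta> B p \<equiv> \<eta> < \<bar>B^2 * (real_of_int (fst p) / real_of_int (snd p) - \<theta>)\<bar> \<and>
              \<bar>B^2 * (real_of_int (fst p) / real_of_int (snd p) - \<theta>)\<bar> \<le> \<epsilon>"

lemma window_bound:
  assumes "B > 0" "(u,v) \<in> TT B" "\<bar>B^2 * (real_of_int u / real_of_int v - \<theta>)\<bar> \<le> \<epsilon>"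
  shows "coprime u v \<and> 0 < v \<and> real_of_int v \<le> B \<and> real_of_int \<bar>u\<bar> \<le> B \<and>
     \<theta> - \<epsilon> / B^2 \<le> real_of_int u / real_of_int v \<and>
     real_of_int u / real_of_int v \<le> (\<theta> - \<epsilon> / B^2) + 2 * \<epsilon> / B^2"
proof -
  have h: "coprime u v" "0 < v" "real_of_int v \<le> B" "real_of_int \<bar>u\<bar> \<le> B" using assms(2) unfolding TT_def by auto
  have b2: "B^2 > 0" using assms(1) by simp
  have "\<bar>real_of_int u / real_of_int v - \<theta>\<bar> \<le> \<epsilon> / B^2"
    using assms(3) b2 by (simp add: abs_mult pos_le_divide_eq mult.commute)
  then show ?thesis using h by (auto simp: abs_le_iff)
qed

lemma limsup_fin:
  assumes "\<epsilon> \<ge> 0"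
  shows "eventually (\<lambda>B. delta \<theta> B (1/2) (chi \<epsilon> \<eta>) \<le> real (nat \<lfloor>2 * \<epsilon>\<rfloor> + 1)) at_top"
proof (rule eventually_at_top_linorderI[of 1])
  fix B :: real assume B1: "B \<ge> 1"
  then have B0: "B > 0" by simp
  let ?S = "{p \<in> TT B. cond \<theta> \<epsilon> \<eta> B p}"
  have "finite ?S \<and> card ?S \<le> nat \<lfloor>(2 * \<epsilon> / B^2) * B^2\<rfloor> + 1"
  proof (rule card_bound[where c = "\<theta> - \<epsilon> / B^2"])
    fix u v assume "(u,v) \<in> ?S"
    then show "coprime u v \<and> 0 < v \<and> real_of_int v \<le> B \<and>
       \<theta> - \<epsilon> / B^2 \<le> real_of_int u / real_of_int v \<and>
       real_of_int u / real_of_int v \<le> (\<theta> - \<epsilon> / B^2) + 2 * \<epsilon> / B^2"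
      using window_bound[OF B0, of u v \<theta> \<epsilon>] by auto
  qed (use B0 assms in auto)
  moreover have "(2 * \<epsilon> / B^2) * B^2 = 2 * \<epsilon>" using B0 by simp
  ultimately have "card ?S \<le> nat \<lfloor>2 * \<epsilon>\<rfloor> + 1" by simp
  then show "delta \<theta> B (1/2) (chi \<epsilon> \<eta>) \<le> real (nat \<lfloor>2 * \<epsilon>\<rfloor> + 1)"
    unfolding delta_card[OF B0] by linarith
qed

lemma freq_pos:
  assumes irr: "\<theta> \<notin> \<rat>" and th: "\<theta> > 0" and e1: "(\<theta>+1)^2 < \<eta>" "\<eta> < \<epsilon>" "1 \<le> \<epsilon>"
  shows "\<exists>B\<ge>N. delta \<theta> B (1/2) (chi \<epsilon> \<eta>) \<ge> 1"
proof -
  have "infinite (approx_set \<theta>)" using irr rational_iff_finite_approx_set by blast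
  from infinite_approx_set[OF this, of "\<lceil>N\<rceil>"]
  obtain h k where hk: "(h,k) \<in> approx_set \<theta>" and kN: "k > \<lceil>N\<rceil>" by blast
  then have k0: "k > 0" and cop: "coprime h k" and ap: "\<bar>\<theta> - real_of_int h / real_of_int k\<bar> < 1 / (real_of_int k)^2"
    unfolding approx_set_def by auto
  define d where "d = \<bar>real_of_int h / real_of_int k - \<theta>\<bar>"
  have d0: "d > 0"
  proof -
    have "real_of_int h / real_of_int k \<in> \<rat>" by simp
    then have "real_of_int h / real_of_int k \<noteq> \<theta>" using irr by auto
    then show ?thesis unfolding d_def by simp
  qed
  have kr: "real_of_int k \<ge> 1" using k0 by simp
  have dk: "d * (real_of_int k)^2 < 1" using ap kr unfolding d_def
    by (simp add: abs_minus_commute pos_less_divide_eq)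
  define B where "B = sqrt (\<epsilon> / d)"
  have B2: "B^2 = \<epsilon> / d" unfolding B_def using d0 e1 by simp
  have B0: "B > 0" unfolding B_def using d0 e1 by simp
  have Bd: "B^2 * d = \<epsilon>" using B2 d0 by simp
  have kB: "real_of_int k < B"
  proof -
    have "(real_of_int k)^2 * d < \<epsilon>" using dk e1 by (simp add: mult.commute)
    then have "(real_of_int k)^2 < B^2" using d0 B2 by (simp add: pos_less_divide_eq)
    then show ?thesis using B0 by (smt (verit) power_mono)
  qed
  have hB: "real_of_int \<bar>h\<bar> < B"
  proof -
    have "\<bar>real_of_int h\<bar> = \<bar>real_of_int k * (real_of_int h / real_of_int k)\<bar>" using k0 by simp
    also have "\<dots> = real_of_int k * \<bar>real_of_int h / real_of_int k\<bar>" using k0 by (simp add: abs_mult)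
    also have "\<dots> \<le> real_of_int k * (\<theta> + d)"
    proof (rule mult_left_mono)
      show "\<bar>real_of_int h / real_of_int k\<bar> \<le> \<theta> + d" using th unfolding d_def by linarith
    qed (use k0 in simp)
    also have "\<dots> = \<theta> * real_of_int k + d * real_of_int k" by (simp add: algebra_simps)
    also have "\<dots> \<le> \<theta> * real_of_int k + real_of_int k"
    proof -
      have "d * real_of_int k * real_of_int k < 1" using dk by (simp add: power2_eq_square mult.assoc)
      then have "d * real_of_int k < 1" using kr
        by (smt (verit) d0 mult_le_cancel_left1 mult_nonneg_nonneg)
      then show ?thesis using kr by linarith
    qed
    finally have hle: "\<bar>real_of_int h\<bar> \<le> (\<theta> + 1) * real_of_int k" by (simp add: algebra_simps)
    then have "(real_of_int h)^2 \<le> ((\<theta> + 1) * real_of_int k)^2"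
      by (metis abs_ge_zero power2_abs power_mono)
    then have "(real_of_int h)^2 * d \<le> (\<theta> + 1)^2 * ((real_of_int k)^2 * d)"
      using d0 by (simp add: power_mult_distrib mult_right_mono)
    also have "\<dots> < (\<theta> + 1)^2 * 1"
      using dk th by (intro mult_strict_left_mono) (auto simp: mult.commute)
    also have "\<dots> < \<epsilon>" using e1 by simp
    finally have "(real_of_int h)^2 < B^2" using d0 B2 by (simp add: pos_less_divide_eq)
    then show ?thesis using B0 by (smt (verit) power2_abs power_mono of_int_abs)
  qed
  have mem: "(h,k) \<in> {p \<in> TT B. cond \<theta> \<epsilon> \<eta> B p}"
  proof -
    have "\<bar>B^2 * (real_of_int h / real_of_int k - \<theta>)\<bar> = \<epsilon>"
      using Bd B0 unfolding d_def by (simp add: abs_mult)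
    then have c: "cond \<theta> \<epsilon> \<eta> B (h,k)" using e1 by simp
    have "max \<bar>real_of_int h\<bar> \<bar>real_of_int k\<bar> \<le> B" using kB hB k0 by simp
    then have "(h,k) \<in> TT B" using k0 cop unfolding TT_def by simp
    then show ?thesis using c by blast
  qed
  have "card {p \<in> TT B. cond \<theta> \<epsilon> \<eta> B p} \<ge> 1"
    proof -
    have "finite {p \<in> TT B. cond \<theta> \<epsilon> \<eta> B p}" using TT_finite[of B] by simp
    then have "card {p \<in> TT B. cond \<theta> \<epsilon> \<eta> B p} > 0" using mem card_gt_0_iff by blast
    then show ?thesis by simp
  qed
  then have "delta \<theta> B (1/2) (chi \<epsilon> \<eta>) \<ge> 1" unfolding delta_card[OF B0] by simp
  moreover have "B \<ge> N" 
  proof -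
    have "real_of_int \<lceil>N\<rceil> < real_of_int k" using kN by linarith
    moreover have "N \<le> real_of_int \<lceil>N\<rceil>" by (rule le_of_int_ceiling)
    ultimately show ?thesis using kB by linarith
  qed
  ultimately show ?thesis by blast
qed



lemma freq_zero:
  fixes K :: nat
  assumes e: "0 < \<eta>" "\<eta> < \<epsilon>" and s: "1 < s" "\<epsilon> < s * \<eta>" "s^(K-1) = 2"
    and K: "K \<ge> 2" "nat \<lfloor>4 * \<epsilon>\<rfloor> + 1 < K"
  shows "\<exists>B\<ge>N. delta \<theta> B (1/2) (chi \<epsilon> \<eta>) = 0"
proof (rule ccontr)
  assume contra: "\<not> ?thesis"
  define X where "X = max N 1"
  have X1: "X \<ge> 1" unfolding X_def by simp
  define Bj where "Bj = (\<lambda>j::nat. X * sqrt (s^j))"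
  have Bj0: "Bj j > 0" for j unfolding Bj_def using X1 s by simp
  have Bj2: "(Bj j)^2 = X^2 * s^j" for j unfolding Bj_def using s by (simp add: power_mult_distrib)
  have BjX: "Bj j \<ge> X" for j
  proof -
    have "s^j \<ge> 1" using s by simp
    then have "sqrt (s^j) \<ge> 1" by simp
    then show ?thesis unfolding Bj_def using mult_left_mono[OF \<open>sqrt (s^j) \<ge> 1\<close>, of X] X1 by simp
  qed
  let ?S = "\<lambda>j. {p \<in> TT (Bj j). cond \<theta> \<epsilon> \<eta> (Bj j) p}"
  have ne: "\<exists>p. p \<in> ?S j" if "j < K" for j
  proof -
    have "Bj j \<ge> N" using BjX[of j] unfolding X_def by linarith
    then have "delta \<theta> (Bj j) (1/2) (chi \<epsilon> \<eta>) \<noteq> 0" using contra by blast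
    then have "card (?S j) \<noteq> 0" unfolding delta_card[OF Bj0] by simp
    then have "?S j \<noteq> {}" by (metis card.empty)
    then show ?thesis by blast
  qed
  then have "\<forall>j. \<exists>p. j < K \<longrightarrow> p \<in> ?S j" by blast
  from choice[OF this] obtain g where g0: "\<forall>j. j < K \<longrightarrow> g j \<in> ?S j" by blast
  have g: "\<And>j. j < K \<Longrightarrow> g j \<in> ?S j" using g0 by blast
  have dist: "g j \<noteq> g k" if jk: "j < k" "k < K" for j k
  proof
    assume eq: "g j = g k"
    define x where "x = \<bar>real_of_int (fst (g j)) / real_of_int (snd (g j)) - \<theta>\<bar>"
    have "\<eta> < (Bj j)^2 * x" using g[of j] jk unfolding x_def by (simp add: abs_mult)
    moreover have "(Bj k)^2 * x \<le> \<epsilon>" using g[of k] jk eq unfolding x_def by (simp add: abs_mult)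
    moreover have "(Bj k)^2 \<ge> s * (Bj j)^2"
    proof -
      have "s^k = s^j * s^(k-j)" using jk by (simp flip: power_add)
      moreover have "s^(k-j) \<ge> s" using power_increasing[of 1 "k-j" s] s jk by simp
      ultimately have sk: "s^k \<ge> s * s^j" using s by (simp add: mult.commute mult_left_mono)
      show ?thesis unfolding Bj2 using mult_left_mono[OF sk, of "X^2"] by (simp add: mult.left_commute)
    qed
    moreover have "x \<ge> 0" unfolding x_def by simp
    ultimately have "s * \<eta> < \<epsilon>"
    proof -
      assume a: "\<eta> < (Bj j)^2 * x" "(Bj k)^2 * x \<le> \<epsilon>" "(Bj k)^2 \<ge> s * (Bj j)^2" "x \<ge> 0"
      have "s * \<eta> < s * ((Bj j)^2 * x)" using s a by simp
      moreover have "s * ((Bj j)^2 * x) \<le> (Bj k)^2 * x" using mult_right_mono[OF a(3) a(4)] by (simp add: mult.assoc)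
      ultimately show ?thesis using a by linarith
    qed
    then show False using s by simp
  qed
  have inj: "inj_on g {..<K}"
  proof (rule inj_onI)
    fix j k assume "j \<in> {..<K}" "k \<in> {..<K}" "g j = g k"
    then show "j = k" using dist by (cases j k rule: linorder_cases) (auto, metis)
  qed
  have "finite (g ` {..<K}) \<and> card (g ` {..<K}) \<le> nat \<lfloor>(2 * \<epsilon> / X^2) * (X * sqrt 2)^2\<rfloor> + 1"
  proof (rule card_bound[where c = "\<theta> - \<epsilon> / X^2"])
    fix u v assume "(u,v) \<in> g ` {..<K}"
    then obtain j where j: "j < K" "(u,v) = g j" by auto
    have m: "(u,v) \<in> ?S j" using g[OF j(1)] j(2) by simp
    have gs: "(u,v) \<in> TT (Bj j)" "\<bar>(Bj j)^2 * (real_of_int u / real_of_int v - \<theta>)\<bar> \<le> \<epsilon>"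
      using m by auto
    note w = window_bound[OF Bj0 gs]
    have sj: "s^j \<le> 2" proof -
      have "j \<le> K - 1" using j by simp
      moreover have "1 \<le> s" using s(1) by simp
      ultimately have "s^j \<le> s^(K-1)" by (rule power_increasing)
      then show ?thesis using s(3) by simp
    qed
    have "Bj j \<le> X * sqrt 2" unfolding Bj_def using sj X1 by (simp add: mult_left_mono)
    moreover have "\<epsilon> / (Bj j)^2 \<le> \<epsilon> / X^2"
      using e X1 BjX[of j] by (intro divide_left_mono) (auto intro: power_mono)
    ultimately show "coprime u v \<and> 0 < v \<and> real_of_int v \<le> X * sqrt 2 \<and>
       \<theta> - \<epsilon> / X^2 \<le> real_of_int u / real_of_int v \<and>
       real_of_int u / real_of_int v \<le> (\<theta> - \<epsilon> / X^2) + 2 * \<epsilon> / X^2"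
      using w by auto
  qed (use X1 e in auto)
  moreover have "(2 * \<epsilon> / X^2) * (X * sqrt 2)^2 = 4 * \<epsilon>" using X1 by (simp add: power_mult_distrib)
  moreover have "card (g ` {..<K}) = K" using card_image[OF inj] by simp
  ultimately show False using K by simp
qed


theorem mainTheorem6:
  fixes a b :: nat and C D :: real
  assumes "0 < a" and "a < b" and "coprime a b"
    and "\<not> ((\<exists>k. a = k ^ 2) \<and> (\<exists>k. b = k ^ 2))"
    and "C > 0" and "D > 0"
  shows "\<exists>\<epsilon> \<eta>. C < \<eta> \<and> \<eta> < \<epsilon> \<and> \<epsilon> - \<eta> < D \<and>
     Liminf at_top (\<lambda>B. ereal (delta (sqrt (real b / real a)) B (1/2) (chi \<epsilon> \<eta>))) = 0 \<and>
     0 < Limsup at_top (\<lambda>B. ereal (delta (sqrt (real b / real a)) B (1/2) (chi \<epsilon> \<eta>))) \<and>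
     Limsup at_top (\<lambda>B. ereal (delta (sqrt (real b / real a)) B (1/2) (chi \<epsilon> \<eta>))) < \<infinity>"
proof -
  define \<theta> where "\<theta> = sqrt (real b / real a)"
  have irr0: "\<theta> \<notin> \<rat>" unfolding \<theta>_def using irr[of a b] assms by simp
  have th1: "\<theta> > 1" unfolding \<theta>_def using assms(1,2) by simp
  define \<eta> where "\<eta> = max C ((\<theta>+1)^2) + 1"
  have eta: "C < \<eta>" "(\<theta>+1)^2 < \<eta>" unfolding \<eta>_def by auto
  have "(\<theta>+1)^2 > 1" using th1 by simp
  then have eta1: "\<eta> > 1" using eta by simp
  define K where "K = nat \<lceil>4 * (\<eta> + 1)\<rceil> + 2"
  have K2: "K \<ge> 2" unfolding K_def by simp
  define s where "s = 2 powr (1 / real (K - 1))"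
  have Kp: "real (K - 1) > 0" using K2 by simp
  have "(2::real) powr 0 < 2 powr (1 / real (K - 1))" by (rule powr_less_mono) (use Kp in auto)
  then have s1: "s > 1" unfolding s_def by simp
  have sK: "s^(K-1) = 2"
  proof -
    have "s^(K-1) = s powr real (K-1)" using s1 by (simp add: powr_realpow)
    also have "\<dots> = 2 powr (1 / real (K - 1) * real (K-1))" unfolding s_def by (simp add: powr_powr)
    also have "\<dots> = 2" using Kp by simp
    finally show ?thesis .
  qed
  define \<delta> where "\<delta> = min (D/2) (min (1/2) (\<eta> * (s - 1) / 2))"
  have d0: "\<delta> > 0" unfolding \<delta>_def using assms(6) s1 eta1 by simp
  define \<epsilon> where "\<epsilon> = \<eta> + \<delta>"
  have es: "\<epsilon> < s * \<eta>"
  proof -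
    have "\<delta> \<le> \<eta> * (s - 1) / 2" unfolding \<delta>_def by simp
    moreover have "\<eta> * (s - 1) > 0" using s1 eta1 by simp
    ultimately show ?thesis unfolding \<epsilon>_def by (simp add: algebra_simps)
  qed
  have eK: "nat \<lfloor>4 * \<epsilon>\<rfloor> + 1 < K"
  proof -
    have "\<delta> \<le> 1/2" unfolding \<delta>_def by simp
    then have "real_of_int \<lfloor>4 * \<epsilon>\<rfloor> \<le> real_of_int \<lceil>4 * (\<eta> + 1)\<rceil>" unfolding \<epsilon>_def
    proof -
      have "4 * (\<eta> + \<delta>) \<le> 4 * (\<eta> + 1)" using \<open>\<delta> \<le> 1/2\<close> by simp
      then show "real_of_int \<lfloor>4 * (\<eta> + \<delta>)\<rfloor> \<le> real_of_int \<lceil>4 * (\<eta> + 1)\<rceil>"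
        using of_int_floor_le[of "4 * (\<eta> + \<delta>)"] le_of_int_ceiling[of "4 * (\<eta> + 1)"]
        by (meson order_trans)
    qed
    then have "\<lfloor>4 * \<epsilon>\<rfloor> \<le> \<lceil>4 * (\<eta> + 1)\<rceil>" by (simp only: of_int_le_iff)
    then have "nat \<lfloor>4 * \<epsilon>\<rfloor> \<le> nat \<lceil>4 * (\<eta> + 1)\<rceil>" by (rule nat_mono)
    then show ?thesis unfolding K_def by simp
  qed
  have Dd: "\<epsilon> - \<eta> < D" unfolding \<epsilon>_def \<delta>_def using assms(6) by simp
  have ee: "\<eta> < \<epsilon>" "1 \<le> \<epsilon>" using d0 eta1 unfolding \<epsilon>_def by auto
  let ?f = "\<lambda>B. ereal (delta \<theta> B (1/2) (chi \<epsilon> \<eta>))"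
  have L0: "Liminf at_top ?f = 0"
  proof (rule antisym)
    show "Liminf at_top ?f \<le> 0"
    proof (rule Liminf_least)
      fix P assume "eventually P (at_top :: real filter)"
      then obtain N where N: "\<And>B. B \<ge> N \<Longrightarrow> P B" by (auto simp: eventually_at_top_linorder)
      obtain B where B: "B \<ge> N" "delta \<theta> B (1/2) (chi \<epsilon> \<eta>) = 0"
        using freq_zero[of \<eta> \<epsilon> s K N \<theta>] eta1 ee es s1 sK K2 eK by auto
      then have "B \<in> Collect P" using N by simp
      then show "(INF x\<in>Collect P. ?f x) \<le> 0" using B(2) by (intro INF_lower2) auto
    qed
    show "0 \<le> Liminf at_top ?f"
      by (rule Liminf_bounded) (simp add: delta_nonneg)
  qed
  have Lp: "1 \<le> Limsup at_top ?f"
  proof (rule Limsup_greatest)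
    fix P assume "eventually P (at_top :: real filter)"
    then obtain N where N: "\<And>B. B \<ge> N \<Longrightarrow> P B" by (auto simp: eventually_at_top_linorder)
    obtain B where B: "B \<ge> N" "delta \<theta> B (1/2) (chi \<epsilon> \<eta>) \<ge> 1"
      using freq_pos[OF irr0 _ eta(2) ee, of N] th1 by auto
    then have "B \<in> Collect P" using N by simp
    then show "1 \<le> (SUP x\<in>Collect P. ?f x)" using B(2) by (intro SUP_upper2) auto
  qed
  have Lf: "Limsup at_top ?f < \<infinity>"
  proof -
    have "Limsup at_top ?f \<le> ereal (real (nat \<lfloor>2 * \<epsilon>\<rfloor> + 1))"
      by (rule Limsup_bounded) (use limsup_fin[of \<epsilon> \<theta> \<eta>] ee in \<open>auto elim: eventually_mono\<close>)
    then show ?thesis by (rule order.strict_trans1) simp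
  qed
  have "C < \<eta> \<and> \<eta> < \<epsilon> \<and> \<epsilon> - \<eta> < D \<and> Liminf at_top ?f = 0 \<and> 0 < Limsup at_top ?f \<and> Limsup at_top ?f < \<infinity>"
  proof -
    have "(0::ereal) < 1" by simp
    then have "0 < Limsup at_top ?f" using Lp by (rule order.strict_trans2)
    then show ?thesis using eta ee Dd L0 Lf by blast
  qed
  then show ?thesis unfolding \<theta>_def by blast
qed

end
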